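(* Let $t\ge 0$ be an integer and $p$ an integer with $1\le p\le\left\lfloor\frac{t+5}{4}\right\rfloor$; set $m=t+3-2p$. Let $r_1<r_2<\cdots<r_p$ be positive real numbers and $R=\{r_1,\dots,r_p\}$. For integers $k,j$ let $$b_{k,j}=\left(r_k\cos\left(\tfrac{2j+k}{m}\pi\right),\ r_k\sin\left(\tfrac{2j+k}{m}\pi\right)\right),$$ and let $\mathcal B=\{b_{k,j}:1\le j\le m,\ 1\le k\le p\}$. Define $w:\mathcal B\to\mathbb{R}$ by $w(b_{k,j})=\frac{1}{r_1^m}$ if $k=1$, and $$w(b_{k,j})=(-1)^k\frac{1}{r_k^m}\prod_{2\le l\le p,\ l\ne k}\frac{r_1^2-r_l^2}{r_k^2-r_l^2}\quad\text{if }2\le k\le p.$$ Then $w$ takes only positive values, $\mathcal B$ is antipodal when $t$ is odd, and $(\mathcal B,w)$ is a tight Euclidean $t$-design in $\mathbb{R}^2$ with norm spectrum $R$.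
   Context: For $r>0$, $S_r^{n-1}\subset\mathbb{R}^n$ is the sphere of radius $r$ centered at the origin and $\overline{f}_{S_r^{n-1}}$ the average of $f$ over it with respect to surface measure. For a finite $\mathcal X\subset\mathbb{R}^n\setminus\{\mathbf 0\}$ with norm spectrum $R=\{\|\mathbf x\|:\mathbf x\in\mathcal X\}$ and weight function $w:\mathcal X\to\mathbb{R}_{>0}$ with $W_r=\sum_{\|\mathbf x\|=r}w(\mathbf x)$, $(\mathcal X,w)$ is a Euclidean $t$-design if $\sum_{r\in R}W_r\overline{f}_{S_r^{n-1}}=\sum_{\mathbf x\in\mathcal X}w(\mathbf x)f(\mathbf x)$ for all real polynomials $f$ of total degree $\le t$. A set is antipodal if $\mathbf x\in\mathcal X\Rightarrow-\mathbf x\in\mathcal X$ (for weighted sets also $w(-\mathbf x)=w(\mathbf x)$). With $d(s)=\binom{s+n-1}{n-1}$ (and $d(s)=0$ for $s<0$), $N_k=d\left(\lfloor t/2\rfloor+2-2k\right)+d\left(\lfloor (t-1)/2\rfloor+2-2k\right)$ and $N(n,p,t)=\sum_{k=1}^pN_k$. A Euclidean $t$-design in $\mathbb{R}^n$ whose norm spectrum has $p$ elements is called tight if it has exactly $N(n,p,t)$ points. *)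

theory Defs
  imports "HOL-Analysis.Analysis"
begin

definition pt2 :: "real \<Rightarrow> real \<Rightarrow> real ^ 2" where
  "pt2 a b = (\<chi> i. if i = 1 then a else b)"

(* A real polynomial of total degree \<le> t on R^2, given by its coefficients c i j
   of the monomials x^i y^j with i + j \<le> t. *)
definition poly2 :: "nat \<Rightarrow> (nat \<Rightarrow> nat \<Rightarrow> real) \<Rightarrow> real ^ 2 \<Rightarrow> real" where
  "poly2 t c x = (\<Sum>i\<le>t. \<Sum>j\<le>t - i. c i j * (x $ 1) ^ i * (x $ 2) ^ j)"

(* Average of f over the circle S_r^1 of radius r w.r.t. arc length (surface measure). *)
definition circle_avg :: "real \<Rightarrow> (real ^ 2 \<Rightarrow> real) \<Rightarrow> real" where
  "circle_avg r f = integral {0..2*pi} (\<lambda>\<theta>. f (pt2 (r * cos \<theta>) (r * sin \<theta>))) / (2 * pi)"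

definition Wr :: "(real ^ 2) set \<Rightarrow> (real ^ 2 \<Rightarrow> real) \<Rightarrow> real \<Rightarrow> real" where
  "Wr X w r = (\<Sum>x\<in>{x\<in>X. norm x = r}. w x)"

definition euclidean_design2 :: "(real ^ 2) set \<Rightarrow> (real ^ 2 \<Rightarrow> real) \<Rightarrow> nat \<Rightarrow> bool" where
  "euclidean_design2 X w t \<longleftrightarrow>
     finite X \<and> 0 \<notin> X \<and> (\<forall>x\<in>X. w x > 0) \<and>
     (\<forall>c. (\<Sum>r\<in>norm ` X. Wr X w r * circle_avg r (poly2 t c)) = (\<Sum>x\<in>X. w x * poly2 t c x))"

definition antipodal_w :: "(real ^ 2) set \<Rightarrow> (real ^ 2 \<Rightarrow> real) \<Rightarrow> bool" where
  "antipodal_w X w \<longleftrightarrow> (\<forall>x\<in>X. -x \<in> X \<and> w (-x) = w x)"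

definition dfun :: "nat \<Rightarrow> int \<Rightarrow> nat" where
  "dfun n s = (if s < 0 then 0 else (nat s + n - 1) choose (n - 1))"

definition Nk :: "nat \<Rightarrow> nat \<Rightarrow> int \<Rightarrow> nat" where
  "Nk n t k = dfun n (\<lfloor>real t / 2\<rfloor> + 2 - 2 * k) + dfun n (\<lfloor>(real t - 1) / 2\<rfloor> + 2 - 2 * k)"

definition Nbound :: "nat \<Rightarrow> nat \<Rightarrow> nat \<Rightarrow> nat" where
  "Nbound n p t = (\<Sum>k=1..p. Nk n t (int k))"

definition tight_design2 :: "(real ^ 2) set \<Rightarrow> (real ^ 2 \<Rightarrow> real) \<Rightarrow> nat \<Rightarrow> bool" where
  "tight_design2 X w t \<longleftrightarrow> euclidean_design2 X w t \<and> card X = Nbound 2 (card (norm ` X)) t"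

end

theory Submission
  imports Defs "HOL-Computational_Algebra.Polynomial"
begin


lemma cis_has_integral_0:
  fixes n :: int assumes "n \<noteq> 0"
  shows "((\<lambda>\<theta>. cis (of_int n * \<theta>)) has_integral 0) {0..2*pi}"
proof -
  define F where "F = (\<lambda>\<theta>::real. cis (of_int n * \<theta>) / (\<i> * of_int n))"
  have d: "(F has_vector_derivative cis (of_int n * x)) (at x within {0..2*pi})" for x
  proof -
    have "((\<lambda>x. cis (of_int n * x)) has_derivative (\<lambda>t. (of_int n * t) *\<^sub>R (\<i> * cis (of_int n * x)))) (at x within {0..2*pi})"
      by (intro has_derivative_cis derivative_intros)
    then have "((\<lambda>x. cis (of_int n * x)) has_vector_derivative (of_int n * (\<i> * cis (of_int n * x)))) (at x within {0..2*pi})"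
      by (simp add: has_vector_derivative_def scaleR_conv_of_real mult_ac)
    then have "((\<lambda>x. cis (of_int n * x) / (\<i> * of_int n)) has_vector_derivative (of_int n * (\<i> * cis (of_int n * x))) / (\<i> * of_int n)) (at x within {0..2*pi})"
      by (rule has_vector_derivative_divide)
    then show ?thesis using assms unfolding F_def by (simp add: field_simps)
  qed
  have "((\<lambda>x. cis (of_int n * x)) has_integral (F (2*pi) - F 0)) {0..2*pi}"
    by (rule fundamental_theorem_of_calculus) (auto intro: d)
  moreover have "F (2*pi) = F 0"
  proof -
    have "cis (of_int n * (2*pi)) = 1"
      using cis_multiple_2pi[of "of_int n"] by (simp add: mult.commute mult.left_commute)
    then show ?thesis by (simp add: F_def)
  qed
  ultimately show ?thesis by simp
qed

lemma tp_integral: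
  fixes \<kappa> :: "'a \<Rightarrow> complex"
  assumes "finite Q"
  shows "((\<lambda>\<theta>. \<Sum>q\<in>Q. \<kappa> q * cis (of_int (e q) * \<theta>)) has_integral
          (2*pi * (\<Sum>q\<in>{q\<in>Q. e q = 0}. \<kappa> q))) {0..2*pi}"
proof -
  have "((\<lambda>\<theta>. \<Sum>q\<in>Q. \<kappa> q * cis (of_int (e q) * \<theta>)) has_integral
          (\<Sum>q\<in>Q. if e q = 0 then 2*pi * \<kappa> q else 0)) {0..2*pi}"
  proof (rule has_integral_sum[OF assms])
    fix q assume "q \<in> Q"
    show "((\<lambda>\<theta>. \<kappa> q * cis (of_int (e q) * \<theta>)) has_integral (if e q = 0 then 2*pi * \<kappa> q else 0)) {0..2*pi}"
    proof (cases "e q = 0")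
      case True
      then show ?thesis using has_integral_const_real[of "\<kappa> q" 0 "2*pi"]
        by (simp add: scaleR_conv_of_real)
    next
      case False
      then show ?thesis using has_integral_mult_right[OF cis_has_integral_0[OF False], of "\<kappa> q"]
        by simp
    qed
  qed
  also have "(\<Sum>q\<in>Q. if e q = 0 then 2*pi * \<kappa> q else 0) = 2*pi * (\<Sum>q\<in>{q\<in>Q. e q = 0}. \<kappa> q)"
    using assms by (simp add: sum.inter_filter sum_distrib_left if_distrib cong: if_cong)
  finally show ?thesis .
qed

lemma ring_term:
  fixes n :: int and m k :: nat
  assumes m: "m > 0" and nb: "\<bar>n\<bar> < 2 * int m"
  shows "(\<Sum>j\<in>{1..m}. cis (of_int n * ((2 * real j + real k) / real m * pi))) =
     (if n = 0 then of_nat m else if int m dvd n then of_nat m * (-1)^k else 0)"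
proof -
  define \<omega> where "\<omega> = cis (2 * pi * of_int n / real m)"
  have split: "cis (of_int n * ((2 * real j + real k) / real m * pi)) = cis (of_int n * real k * pi / real m) * \<omega> ^ j" for j
    unfolding \<omega>_def Complex.DeMoivre cis_mult by (rule arg_cong[where f=cis]) (simp add: field_simps add_divide_distrib)
  have sum: "(\<Sum>j\<in>{1..m}. cis (of_int n * ((2 * real j + real k) / real m * pi))) =
      cis (of_int n * real k * pi / real m) * (\<Sum>j\<in>{1..m}. \<omega> ^ j)"
    unfolding sum_distrib_left by (rule sum.cong[OF refl split])
  show ?thesis
  proof (cases "int m dvd n")
    case True
    then obtain s where ns: "n = int m * s" by auto
    have om: "\<omega> = 1" unfolding \<omega>_def ns using m
      using cis_multiple_2pi[of "of_int s"] by (simp add: field_simps)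
    have "(\<Sum>j\<in>{1..m}. \<omega> ^ j) = of_nat m" by (simp add: om)
    moreover have "cis (of_int n * real k * pi / real m) = (if n = 0 then 1 else (-1)^k)"
    proof (cases "n = 0")
      case True then show ?thesis by simp
    next
      case False
      have "int m * \<bar>s\<bar> < int m * 2" using nb ns by (simp add: abs_mult)
      then have "\<bar>s\<bar> < 2" using m by simp
      moreover have "s \<noteq> 0" using False ns by auto
      ultimately have "s = 1 \<or> s = -1" by auto
      then have "cis (of_int n * real k * pi / real m) = cis (of_int s * (real k * pi))"
        using m ns by (intro arg_cong[where f=cis]) (auto simp: field_simps)
      also have "\<dots> = (-1)^k"
        using \<open>s = 1 \<or> s = -1\<close> by (auto simp: complex_eq_iff cis.sel)
      finally show ?thesis using False by simp
    qed
    ultimately show ?thesis using True unfolding sum by simp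
  next
    case False
    then have n0: "n \<noteq> 0" by auto
    have "\<omega> \<noteq> 1"
    proof
      assume "\<omega> = 1"
      then have "cos (2 * pi * of_int n / real m) = 1" unfolding \<omega>_def by (metis cis.sel(1) one_complex.sel(1))
      then obtain l :: int where "2 * pi * of_int n / real m = of_int l * 2 * pi" by (auto simp: cos_one_2pi_int)
      then have "real_of_int n = real m * of_int l" using m by (simp add: field_simps)
      then have "n = int m * l" by (metis of_int_eq_iff of_int_mult of_int_of_nat_eq)
      then show False using False by auto
    qed
    moreover have "\<omega> ^ m = 1" unfolding \<omega>_def Complex.DeMoivre using m
      using cis_multiple_2pi[of "of_int n"] by (simp add: field_simps)
    ultimately have "(\<Sum>j\<in>{1..m}. \<omega> ^ j) = 0" using m
      by (simp add: sum_gp power_Suc)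
    then show ?thesis using False n0 unfolding sum by simp
  qed
qed

lemma tp_ring:
  fixes \<kappa> :: "'a \<Rightarrow> complex" and m k :: nat
  assumes Q: "finite Q" and m: "m > 0" and eb: "\<forall>q\<in>Q. \<bar>e q\<bar> < 2 * int m"
  shows "(\<Sum>j\<in>{1..m}. \<Sum>q\<in>Q. \<kappa> q * cis (of_int (e q) * ((2 * real j + real k) / real m * pi))) =
     of_nat m * (\<Sum>q\<in>{q\<in>Q. e q = 0}. \<kappa> q) +
     of_nat m * (-1)^k * (\<Sum>q\<in>{q\<in>Q. e q \<noteq> 0 \<and> int m dvd e q}. \<kappa> q)"
proof -
  have "(\<Sum>j\<in>{1..m}. \<Sum>q\<in>Q. \<kappa> q * cis (of_int (e q) * ((2 * real j + real k) / real m * pi))) =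
     (\<Sum>q\<in>Q. \<kappa> q * (\<Sum>j\<in>{1..m}. cis (of_int (e q) * ((2 * real j + real k) / real m * pi))))"
    by (subst sum.swap) (simp add: sum_distrib_left)
  also have "\<dots> = (\<Sum>q\<in>Q. \<kappa> q * (if e q = 0 then of_nat m else if int m dvd e q then of_nat m * (-1)^k else 0))"
    using eb m by (intro sum.cong refl arg_cong2[where f=times] ring_term) auto
  also have "\<dots> = (\<Sum>q\<in>Q. (if e q = 0 then of_nat m * \<kappa> q else 0)) +
                  (\<Sum>q\<in>Q. (if e q \<noteq> 0 \<and> int m dvd e q then of_nat m * (-1)^k * \<kappa> q else 0))"
    by (subst sum.distrib[symmetric]) (intro sum.cong refl, auto)
  also have "\<dots> = of_nat m * (\<Sum>q\<in>{q\<in>Q. e q = 0}. \<kappa> q) +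
     of_nat m * (-1)^k * (\<Sum>q\<in>{q\<in>Q. e q \<noteq> 0 \<and> int m dvd e q}. \<kappa> q)"
    using Q by (simp add: sum.inter_filter sum_distrib_left if_distrib cong: if_cong)
  finally show ?thesis .
qed

lemma cos_expand:
  "complex_of_real (cos \<theta> ^ i) =
     (\<Sum>a\<le>i. of_nat (i choose a) / 2^i * cis (of_int (2 * int a - int i) * \<theta>))"
proof -
  have c: "complex_of_real (cos \<theta>) = (cis \<theta> + cis (-\<theta>)) / 2"
    by (simp add: complex_eq_iff)
  have "complex_of_real (cos \<theta> ^ i) = (cis \<theta> + cis (-\<theta>))^i / 2^i"
    by (simp add: c power_divide)
  also have "\<dots> = (\<Sum>a\<le>i. of_nat (i choose a) * cis \<theta> ^ a * cis (-\<theta>) ^ (i - a)) / 2^i"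
    by (simp add: binomial_ring)
  also have "\<dots> = (\<Sum>a\<le>i. of_nat (i choose a) / 2^i * cis (of_int (2 * int a - int i) * \<theta>))"
    unfolding sum_divide_distrib
  proof (intro sum.cong refl)
    fix a assume "a \<in> {..i}"
    then have ai: "a \<le> i" by simp
    have "cis \<theta> ^ a * cis (-\<theta>) ^ (i - a) = cis (of_int (2 * int a - int i) * \<theta>)"
      unfolding Complex.DeMoivre cis_mult using ai by (intro arg_cong[where f=cis]) (simp add: algebra_simps of_nat_diff)
    then show "of_nat (i choose a) * cis \<theta> ^ a * cis (-\<theta>) ^ (i - a) / 2^i = of_nat (i choose a) / 2^i * cis (of_int (2 * int a - int i) * \<theta>)"
      by (simp add: mult.assoc)
  qed
  finally show ?thesis .
qed

lemma sin_expand: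
  "complex_of_real (sin \<theta> ^ j) =
     (\<Sum>b\<le>j. of_nat (j choose b) * (-1)^(j-b) / (2*\<i>)^j * cis (of_int (2 * int b - int j) * \<theta>))"
proof -
  have c: "complex_of_real (sin \<theta>) = (cis \<theta> + - cis (-\<theta>)) / (2*\<i>)"
  proof -
    have "cis \<theta> + - cis (-\<theta>) = (2*\<i>) * complex_of_real (sin \<theta>)"
      by (simp add: complex_eq_iff)
    then show ?thesis by simp
  qed
  have "complex_of_real (sin \<theta> ^ j) = (cis \<theta> + - cis (-\<theta>))^j / (2*\<i>)^j"
    by (simp only: c power_divide of_real_power)
  also have "\<dots> = (\<Sum>b\<le>j. of_nat (j choose b) * cis \<theta> ^ b * (- cis (-\<theta>)) ^ (j - b)) / (2*\<i>)^j"
    by (simp only: binomial_ring)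
  also have "\<dots> = (\<Sum>b\<le>j. of_nat (j choose b) * (-1)^(j-b) / (2*\<i>)^j * cis (of_int (2 * int b - int j) * \<theta>))"
    unfolding sum_divide_distrib
  proof (intro sum.cong refl)
    fix b assume "b \<in> {..j}"
    then have bj: "b \<le> j" by simp
    have "cis \<theta> ^ b * cis (-\<theta>) ^ (j - b) = cis (of_int (2 * int b - int j) * \<theta>)"
      unfolding Complex.DeMoivre cis_mult using bj by (intro arg_cong[where f=cis]) (simp add: algebra_simps of_nat_diff)
    moreover have H2: "(- cis (-\<theta>)) ^ (j - b) = (-1)^(j-b) * cis (-\<theta>) ^ (j - b)"
      by (rule power_minus)
    ultimately show "of_nat (j choose b) * cis \<theta> ^ b * (- cis (-\<theta>)) ^ (j - b) / (2*\<i>)^j = of_nat (j choose b) * (-1)^(j-b) / (2*\<i>)^j * cis (of_int (2 * int b - int j) * \<theta>)"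
      unfolding H2 by (simp only: flip: \<open>cis \<theta> ^ b * cis (-\<theta>) ^ (j - b) = _\<close>) (simp add: divide_inverse mult_ac)
  qed
  finally show ?thesis .
qed

definition kap :: "nat \<Rightarrow> nat \<Rightarrow> nat \<times> nat \<Rightarrow> complex" where
  "kap i j q = of_nat (i choose fst q) / 2^i * (of_nat (j choose snd q) * (-1)^(j - snd q) / (2*\<i>)^j)"

definition ex :: "nat \<Rightarrow> nat \<Rightarrow> nat \<times> nat \<Rightarrow> int" where
  "ex i j q = 2 * int (fst q) + 2 * int (snd q) - int i - int j"

lemma cs_expand:
  "complex_of_real (cos \<theta> ^ i * sin \<theta> ^ j) =
     (\<Sum>q\<in>{..i}\<times>{..j}. kap i j q * cis (of_int (ex i j q) * \<theta>))"
proof -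
  have "complex_of_real (cos \<theta> ^ i * sin \<theta> ^ j) = complex_of_real (cos \<theta> ^ i) * complex_of_real (sin \<theta> ^ j)"
    by simp
  also have "\<dots> = (\<Sum>a\<le>i. \<Sum>b\<le>j. (of_nat (i choose a) / 2^i * cis (of_int (2 * int a - int i) * \<theta>)) *
        (of_nat (j choose b) * (-1)^(j-b) / (2*\<i>)^j * cis (of_int (2 * int b - int j) * \<theta>)))"
    unfolding cos_expand sin_expand by (rule sum_product)
  also have "\<dots> = (\<Sum>q\<in>{..i}\<times>{..j}. kap i j q * cis (of_int (ex i j q) * \<theta>))"
    unfolding sum.cartesian_product
  proof (intro sum.cong refl, clarify)
    fix a b
    have H: "cis (of_int (2 * int a - int i) * \<theta>) * cis (of_int (2 * int b - int j) * \<theta>) = cis (of_int (ex i j (a,b)) * \<theta>)"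
      unfolding cis_mult ex_def by (intro arg_cong[where f=cis]) (simp add: algebra_simps)
    then show "(of_nat (i choose a) / 2^i * cis (of_int (2 * int a - int i) * \<theta>)) *
        (of_nat (j choose b) * (-1)^(j-b) / (2*\<i>)^j * cis (of_int (2 * int b - int j) * \<theta>)) =
        kap i j (a,b) * cis (of_int (ex i j (a,b)) * \<theta>)"
      unfolding kap_def by (simp only: flip: H) (simp add: divide_inverse mult_ac)
  qed
  finally show ?thesis .
qed

lemma lagrange_power:
  fixes x :: "nat \<Rightarrow> real"
  assumes N: "finite N" and inj: "inj_on x N" and s: "s < card N"
  shows "(\<Sum>k\<in>N. (\<Prod>l\<in>N-{k}. (y - x l) / (x k - x l)) * x k ^ s) = y ^ s"
proof -
  define L where "L k = (\<Prod>l\<in>N-{k}. smult (1 / (x k - x l)) [:- x l, 1:])" for k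
  define P where "P = (\<Sum>k\<in>N. smult (x k ^ s) (L k))"
  have polyL: "poly (L k) z = (\<Prod>l\<in>N-{k}. (z - x l) / (x k - x l))" for k z
    unfolding L_def by (simp add: poly_prod diff_divide_distrib)
  have polyP: "poly P z = (\<Sum>k\<in>N. (\<Prod>l\<in>N-{k}. (z - x l) / (x k - x l)) * x k ^ s)" for z
    unfolding P_def by (simp add: poly_sum polyL mult.commute)
  have degL: "degree (L k) \<le> card N - 1" if "k \<in> N" for k
  proof -
    have "degree (L k) \<le> (\<Sum>l\<in>N-{k}. degree (smult (1 / (x k - x l)) [:- x l, 1:]))"
      unfolding L_def using degree_prod_sum_le[of "N-{k}" "\<lambda>l. smult (1 / (x k - x l)) [:- x l, 1:]"] N by (simp only: o_def finite_Diff)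
    also have "\<dots> \<le> (\<Sum>l\<in>N-{k}. 1)"
      by (intro sum_mono) (simp add: degree_smult_le)
    also have "\<dots> = card N - 1" using that N by simp
    finally show ?thesis .
  qed
  have degP: "degree P \<le> card N - 1"
    unfolding P_def
    by (intro degree_sum_le N) (use degL degree_smult_le order_trans in blast)
  have "P = monom 1 s"
  proof (rule poly_eqI_degree[where A="x ` N"])
    fix z assume "z \<in> x ` N"
    then obtain k0 where k0: "k0 \<in> N" "z = x k0" by auto
    have "poly P z = (\<Prod>l\<in>N-{k0}. (x k0 - x l) / (x k0 - x l)) * x k0 ^ s +
        (\<Sum>k\<in>N-{k0}. (\<Prod>l\<in>N-{k}. (x k0 - x l) / (x k - x l)) * x k ^ s)"
      unfolding polyP k0(2) using N k0(1) by (simp add: sum.remove)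
    also have "(\<Prod>l\<in>N-{k0}. (x k0 - x l) / (x k0 - x l)) = 1"
    proof (intro prod.neutral ballI)
      fix l assume "l \<in> N - {k0}"
      then have "x k0 \<noteq> x l" using inj k0(1) by (auto dest: inj_onD)
      then show "(x k0 - x l) / (x k0 - x l) = 1" by simp
    qed
    also have "(\<Sum>k\<in>N-{k0}. (\<Prod>l\<in>N-{k}. (x k0 - x l) / (x k - x l)) * x k ^ s) = 0"
    proof (intro sum.neutral ballI)
      fix k assume "k \<in> N - {k0}"
      then have "k0 \<in> N - {k}" using k0 by auto
      then have "(\<Prod>l\<in>N-{k}. (x k0 - x l) / (x k - x l)) = 0"
        using N by (intro prod_zero) auto
      then show "(\<Prod>l\<in>N-{k}. (x k0 - x l) / (x k - x l)) * x k ^ s = 0" by simp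
    qed
    finally show "poly P z = poly (monom 1 s) z" using k0 by (simp add: poly_monom)
  next
    show "degree P < card (x ` N)" using degP s card_image[OF inj] by simp
  next
    show "degree (monom (1::real) s) < card (x ` N)" using s card_image[OF inj] by (simp add: degree_monom_eq)
  qed
  then show ?thesis using polyP[of y] by (simp add: poly_monom)
qed

definition Acoef :: "nat \<Rightarrow> nat \<Rightarrow> real" where
  "Acoef i j = Re (\<Sum>q\<in>{q\<in>{..i}\<times>{..j}. ex i j q = 0}. kap i j q)"

definition Bcoef :: "nat \<Rightarrow> nat \<Rightarrow> nat \<Rightarrow> real" where
  "Bcoef m i j = Re (\<Sum>q\<in>{q\<in>{..i}\<times>{..j}. ex i j q \<noteq> 0 \<and> int m dvd ex i j q}. kap i j q)"

lemma cs_integral: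
  "((\<lambda>\<theta>. cos \<theta> ^ i * sin \<theta> ^ j) has_integral (2 * pi * Acoef i j)) {0..2*pi}"
proof -
  have "((\<lambda>\<theta>. \<Sum>q\<in>{..i}\<times>{..j}. kap i j q * cis (of_int (ex i j q) * \<theta>)) has_integral
          (2*pi * (\<Sum>q\<in>{q\<in>{..i}\<times>{..j}. ex i j q = 0}. kap i j q))) {0..2*pi}"
    by (rule tp_integral) simp
  from has_integral_linear[OF this bounded_linear_Re]
  have "((Re \<circ> (\<lambda>\<theta>. \<Sum>q\<in>{..i}\<times>{..j}. kap i j q * cis (of_int (ex i j q) * \<theta>))) has_integral
          Re (2*pi * (\<Sum>q\<in>{q\<in>{..i}\<times>{..j}. ex i j q = 0}. kap i j q))) {0..2*pi}" .
  moreover have "(Re \<circ> (\<lambda>\<theta>. \<Sum>q\<in>{..i}\<times>{..j}. kap i j q * cis (of_int (ex i j q) * \<theta>))) =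
      (\<lambda>\<theta>. cos \<theta> ^ i * sin \<theta> ^ j)"
    by (rule ext) (simp only: o_def cs_expand[symmetric] Re_complex_of_real)
  moreover have "Re (2*pi * (\<Sum>q\<in>{q\<in>{..i}\<times>{..j}. ex i j q = 0}. kap i j q)) = 2 * pi * Acoef i j"
    unfolding Acoef_def by simp
  ultimately show ?thesis by simp
qed

lemma ex_bound: "q \<in> {..i}\<times>{..j} \<Longrightarrow> \<bar>ex i j q\<bar> \<le> int (i + j)"
  unfolding ex_def by auto

lemma cs_ring:
  assumes m: "m > 0" and d: "i + j < 2 * m"
  shows "(\<Sum>l\<in>{1..m}. cos ((2 * real l + real k) / real m * pi) ^ i * sin ((2 * real l + real k) / real m * pi) ^ j)
      = real m * (Acoef i j + (-1)^k * Bcoef m i j)"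
proof -
  have "complex_of_real (\<Sum>l\<in>{1..m}. cos ((2 * real l + real k) / real m * pi) ^ i * sin ((2 * real l + real k) / real m * pi) ^ j)
     = (\<Sum>l\<in>{1..m}. \<Sum>q\<in>{..i}\<times>{..j}. kap i j q * cis (of_int (ex i j q) * ((2 * real l + real k) / real m * pi)))"
    by (simp only: of_real_sum cs_expand)
  also have "\<dots> = of_nat m * (\<Sum>q\<in>{q\<in>{..i}\<times>{..j}. ex i j q = 0}. kap i j q) +
     of_nat m * (-1)^k * (\<Sum>q\<in>{q\<in>{..i}\<times>{..j}. ex i j q \<noteq> 0 \<and> int m dvd ex i j q}. kap i j q)"
  proof (rule tp_ring)
    show "\<forall>q\<in>{..i}\<times>{..j}. \<bar>ex i j q\<bar> < 2 * int m"
      using ex_bound d by fastforce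
  qed (use m in auto)
  finally have "complex_of_real (\<Sum>l\<in>{1..m}. cos ((2 * real l + real k) / real m * pi) ^ i * sin ((2 * real l + real k) / real m * pi) ^ j) = \<dots>" .
  then have "Re (complex_of_real (\<Sum>l\<in>{1..m}. cos ((2 * real l + real k) / real m * pi) ^ i * sin ((2 * real l + real k) / real m * pi) ^ j)) = 
    Re (of_nat m * (\<Sum>q\<in>{q\<in>{..i}\<times>{..j}. ex i j q = 0}. kap i j q) +
     of_nat m * (-1)^k * (\<Sum>q\<in>{q\<in>{..i}\<times>{..j}. ex i j q \<noteq> 0 \<and> int m dvd ex i j q}. kap i j q))" by simp
  also have "\<dots> = real m * (Acoef i j + (-1)^k * Bcoef m i j)"
    unfolding Acoef_def Bcoef_def by (simp add: algebra_simps)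
  finally show ?thesis by simp
qed

lemma Bcoef_zero:
  assumes m: "m > 0" and d: "i + j < 2 * m" and nz: "Bcoef m i j \<noteq> 0"
  shows "m \<le> i + j \<and> even (i + j - m)"
proof -
  have "{q\<in>{..i}\<times>{..j}. ex i j q \<noteq> 0 \<and> int m dvd ex i j q} \<noteq> {}"
    using nz unfolding Bcoef_def by (metis sum.empty zero_complex.sel(1))
  then obtain a b where ab: "a \<le> i" "b \<le> j" "ex i j (a,b) \<noteq> 0" "int m dvd ex i j (a,b)" by auto
  then obtain s where s: "ex i j (a,b) = int m * s" by (auto elim: dvdE)
  have "\<bar>ex i j (a,b)\<bar> \<le> int (i+j)" using ab by (intro ex_bound) auto
  then have "int m * \<bar>s\<bar> \<le> int (i+j)" using s by (simp add: abs_mult)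
  then have "int m * \<bar>s\<bar> < int m * 2" using d by linarith
  then have "\<bar>s\<bar> < 2" using m by simp
  moreover have "s \<noteq> 0" using ab s by auto
  ultimately have "s = 1 \<or> s = -1" by auto
  then have "ex i j (a,b) = int m \<or> ex i j (a,b) = - int m" using s by auto
  then show ?thesis using \<open>\<bar>ex i j (a,b)\<bar> \<le> int (i+j)\<close> unfolding ex_def by auto presburger+
qed

lemma pt2_1[simp]: "pt2 a b $ 1 = a" and pt2_2[simp]: "pt2 a b $ 2 = b"
  by (simp_all add: pt2_def)

lemma norm_pt2: "norm (pt2 a b) = sqrt (a^2 + b^2)"
  by (simp add: norm_vec_def L2_set_def sum_2)

lemma neg_pt2: "- pt2 a b = pt2 (-a) (-b)"
  by (simp add: vec_eq_iff pt2_def)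

lemma pt2_eq_iff: "pt2 a b = pt2 a' b' \<longleftrightarrow> a = a' \<and> b = b'"
  by (metis pt2_1 pt2_2)

lemma norm_pt2_polar: "\<rho> \<ge> 0 \<Longrightarrow> norm (pt2 (\<rho> * cos \<theta>) (\<rho> * sin \<theta>)) = \<rho>"
proof -
  assume "\<rho> \<ge> 0"
  have "(\<rho> * cos \<theta>)^2 + (\<rho> * sin \<theta>)^2 = \<rho>^2"
    by (simp add: power_mult_distrib flip: distrib_left)
  then show ?thesis using \<open>\<rho> \<ge> 0\<close> by (simp add: norm_pt2)
qed

lemma poly2_polar:
  "poly2 t c (pt2 (\<rho> * cos \<theta>) (\<rho> * sin \<theta>)) =
    (\<Sum>i\<le>t. \<Sum>j\<le>t - i. (c i j * \<rho>^(i+j)) * (cos \<theta> ^ i * sin \<theta> ^ j))"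
  unfolding poly2_def by (intro sum.cong refl) (simp add: power_mult_distrib power_add)

lemma circle_avg_poly2:
  "circle_avg \<rho> (poly2 t c) = (\<Sum>i\<le>t. \<Sum>j\<le>t - i. c i j * \<rho>^(i+j) * Acoef i j)"
proof -
  have "((\<lambda>\<theta>. poly2 t c (pt2 (\<rho> * cos \<theta>) (\<rho> * sin \<theta>))) has_integral
       (\<Sum>i\<le>t. \<Sum>j\<le>t - i. (c i j * \<rho>^(i+j)) * (2 * pi * Acoef i j))) {0..2*pi}"
    unfolding poly2_polar
    by (intro has_integral_sum finite_atMost has_integral_mult_right cs_integral)
  then have "integral {0..2*pi} (\<lambda>\<theta>. poly2 t c (pt2 (\<rho> * cos \<theta>) (\<rho> * sin \<theta>))) =
       2 * pi * (\<Sum>i\<le>t. \<Sum>j\<le>t - i. c i j * \<rho>^(i+j) * Acoef i j)"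
    by (simp add: integral_unique sum_distrib_left mult_ac)
  then show ?thesis unfolding circle_avg_def by simp
qed

lemma ring_poly2:
  assumes m: "m > 0" and t: "t < 2 * m"
  shows "(\<Sum>l\<in>{1..m}. poly2 t c (pt2 (\<rho> * cos ((2 * real l + real k) / real m * pi)) (\<rho> * sin ((2 * real l + real k) / real m * pi))))
     = (\<Sum>i\<le>t. \<Sum>j\<le>t - i. c i j * \<rho>^(i+j) * (real m * (Acoef i j + (-1)^k * Bcoef m i j)))"
proof -
  have "(\<Sum>l\<in>{1..m}. poly2 t c (pt2 (\<rho> * cos ((2 * real l + real k) / real m * pi)) (\<rho> * sin ((2 * real l + real k) / real m * pi))))
     = (\<Sum>i\<le>t. \<Sum>j\<le>t - i. (c i j * \<rho>^(i+j)) * (\<Sum>l\<in>{1..m}. cos ((2 * real l + real k) / real m * pi) ^ i * sin ((2 * real l + real k) / real m * pi) ^ j))"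
    unfolding poly2_polar sum_distrib_left
    by (subst sum.swap) (subst (2) sum.swap, rule refl)
  also have "\<dots> = (\<Sum>i\<le>t. \<Sum>j\<le>t - i. c i j * \<rho>^(i+j) * (real m * (Acoef i j + (-1)^k * Bcoef m i j)))"
  proof (intro sum.cong refl)
    fix i j assume "i \<in> {..t}" "j \<in> {..t - i}"
    then have "i + j < 2 * m" using t by auto
    then show "c i j * \<rho>^(i+j) * (\<Sum>l\<in>{1..m}. cos ((2 * real l + real k) / real m * pi) ^ i * sin ((2 * real l + real k) / real m * pi) ^ j) =
      c i j * \<rho>^(i+j) * (real m * (Acoef i j + (-1)^k * Bcoef m i j))"
      using cs_ring[OF m] by simp
  qed
  finally show ?thesis .
qed

lemma prod_sign:
  fixes f :: "nat \<Rightarrow> real"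
  assumes "finite A" "\<forall>l\<in>A. f l \<noteq> 0"
  shows "(-1) ^ card {l\<in>A. f l < 0} * prod f A > 0"
  using assms
proof (induction A rule: finite_induct)
  case empty then show ?case by simp
next
  case (insert a A)
  have IH: "(-1) ^ card {l\<in>A. f l < 0} * prod f A > 0" using insert by auto
  have fa: "f a \<noteq> 0" using insert by auto
  show ?case
  proof (cases "f a < 0")
    case True
    then have "{l\<in>insert a A. f l < 0} = insert a {l\<in>A. f l < 0}" by auto
    moreover have "card (insert a {l\<in>A. f l < 0}) = Suc (card {l\<in>A. f l < 0})"
      using insert by (intro card_insert_disjoint) auto
    ultimately have "(-1) ^ card {l\<in>insert a A. f l < 0} * prod f (insert a A) =
        (- f a) * ((-1) ^ card {l\<in>A. f l < 0} * prod f A)"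
      using insert by simp
    also have "\<dots> > 0" using True IH by (rule_tac mult_pos_pos) auto
    finally show ?thesis .
  next
    case False
    then have "f a > 0" using fa by auto
    have "{l\<in>insert a A. f l < 0} = {l\<in>A. f l < 0}" using False by auto
    then have "(-1) ^ card {l\<in>insert a A. f l < 0} * prod f (insert a A) =
        f a * ((-1) ^ card {l\<in>A. f l < 0} * prod f A)"
      using insert by (simp add: mult_ac)
    also have "\<dots> > 0" using \<open>f a > 0\<close> IH by (rule_tac mult_pos_pos) auto
    finally show ?thesis .
  qed
qed

lemma Nk2:
  assumes "1 \<le> k" "4 * k \<le> t + 5"
  shows "Nk 2 t (int k) = t + 5 - 4 * k"
proof -
  have f1: "\<lfloor>real t / 2\<rfloor> = int t div 2"
    using floor_divide_of_int_eq[of "int t" 2] by simp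
  have f2: "\<lfloor>(real t - 1) / 2\<rfloor> = (int t - 1) div 2"
    using floor_divide_of_int_eq[of "int t - 1" 2] by simp
  have d: "dfun 2 s = (if s < 0 then 0 else nat (s + 1))" for s
    unfolding dfun_def by (simp add: nat_add_distrib)
  have h1: "int t div 2 + (int t - 1) div 2 = int t - 1" by presburger
  have h2: "int t div 2 + 2 - 2 * int k \<ge> -1" using assms by presburger
  have h3: "(int t - 1) div 2 + 2 - 2 * int k \<ge> -1" using assms by presburger
  have e: "(if s < 0 then 0 else nat (s + 1)) = nat (s + 1)" if "s \<ge> -1" for s :: int
    using that by auto
  show ?thesis unfolding Nk_def f1 f2 d e[OF h2] e[OF h3] using h1 h2 h3 assms by linarith
qed

lemma Nbound2:
  assumes "4 * p \<le> t + 5"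
  shows "Nbound 2 p t = p * (t + 3 - 2 * p)"
proof -
  have "4 * q \<le> t + 5 \<Longrightarrow> int (\<Sum>k=1..q. Nk 2 t (int k)) = int q * (int t + 3 - 2 * int q)" for q
  proof (induction q)
    case 0 then show ?case by simp
  next
    case (Suc q)
    have "int (\<Sum>k=1..Suc q. Nk 2 t (int k)) = int (\<Sum>k=1..q. Nk 2 t (int k)) + int (Nk 2 t (int (Suc q)))"
      by simp
    also have "\<dots> = int q * (int t + 3 - 2 * int q) + int (t + 5 - 4 * Suc q)"
    proof -
      have "Nk 2 t (int (Suc q)) = t + 5 - 4 * Suc q" using Suc.prems by (intro Nk2) auto
      moreover have "int (\<Sum>k=1..q. Nk 2 t (int k)) = int q * (int t + 3 - 2 * int q)"
        using Suc by simp
      ultimately show ?thesis by simp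
    qed
    also have "\<dots> = int (Suc q) * (int t + 3 - 2 * int (Suc q))"
      using Suc.prems by (simp add: of_nat_diff algebra_simps)
    finally show ?case .
  qed
  from this[OF assms] have "int (Nbound 2 p t) = int p * (int t + 3 - 2 * int p)"
    unfolding Nbound_def .
  also have "\<dots> = int (p * (t + 3 - 2 * p))" using assms by (simp add: of_nat_diff)
  finally show ?thesis by (simp only: of_nat_eq_iff)
qed


theorem mainTheorem2:
  fixes t p m :: nat and r :: "nat \<Rightarrow> real" and w :: "real ^ 2 \<Rightarrow> real"
    and b :: "nat \<Rightarrow> nat \<Rightarrow> real ^ 2" and B :: "(real ^ 2) set"
  assumes hp: "1 \<le> p" "p \<le> (t + 5) div 4"
    and hm: "m = t + 3 - 2 * p"
    and hr0: "0 < r 1"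
    and hrmono: "\<forall>k\<in>{1..p}. \<forall>l\<in>{1..p}. k < l \<longrightarrow> r k < r l"
    and hb: "\<forall>k j. b k j = pt2 (r k * cos ((2 * real j + real k) / real m * pi))
                                 (r k * sin ((2 * real j + real k) / real m * pi))"
    and hB: "B = {b k j | k j. j \<in> {1..m} \<and> k \<in> {1..p}}"
    and hw: "\<forall>k\<in>{1..p}. \<forall>j\<in>{1..m}. w (b k j) =
              (if k = 1 then 1 / r 1 ^ m
               else (-1) ^ k * (1 / r k ^ m) *
                    (\<Prod>l\<in>{2..p} - {k}. (r 1 ^ 2 - r l ^ 2) / (r k ^ 2 - r l ^ 2)))"
  shows "(\<forall>x\<in>B. w x > 0) \<and> (odd t \<longrightarrow> antipodal_w B w) \<and>
         tight_design2 B w t \<and> norm ` B = r ` {1..p}"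
proof -
  have h4: "4 * p \<le> t + 5" using hp(2) by (simp add: less_eq_div_iff_mult_less_eq)
  have tm: "t + 3 = m + 2 * p" using h4 hm by simp
  have m0: "m > 0" using h4 hm by simp
  have t2m: "t < 2 * m" using h4 hm by simp
  have rpos: "r k > 0" if "k \<in> {1..p}" for k
  proof (cases "k = 1")
    case True then show ?thesis using hr0 by simp
  next
    case False
    then have "r 1 < r k" using hrmono that hp(1) by auto
    then show ?thesis using hr0 by simp
  qed
  have rless: "r k < r l" if "k \<in> {1..p}" "l \<in> {1..p}" "k < l" for k l
    using hrmono that by blast
  have rinj: "inj_on r {1..p}"
  proof (rule inj_onI)
    fix k l assume "k \<in> {1..p}" "l \<in> {1..p}" "r k = r l"
    then show "k = l" using rless[of k l] rless[of l k] by (cases k l rule: linorder_cases) auto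
  qed
  define \<Theta> where "\<Theta> k j = (2 * real j + real k) / real m * pi" for k j :: nat
  have bdef: "b k j = pt2 (r k * cos (\<Theta> k j)) (r k * sin (\<Theta> k j))" for k j
    using hb unfolding \<Theta>_def by blast
  have normb: "norm (b k j) = r k" if "k \<in> {1..p}" for k j
    unfolding bdef using rpos[OF that] by (intro norm_pt2_polar) simp
  define W where "W k = (if k = 1 then 1 / r 1 ^ m
               else (-1) ^ k * (1 / r k ^ m) *
                    (\<Prod>l\<in>{2..p} - {k}. (r 1 ^ 2 - r l ^ 2) / (r k ^ 2 - r l ^ 2)))" for k
  have wb: "w (b k j) = W k" if "k \<in> {1..p}" "j \<in> {1..m}" for k j
    using hw that unfolding W_def by blast
  define D where "D = {1..p} \<times> {1..m}"
  have binj: "inj_on (\<lambda>(k,j). b k j) D"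
  proof (rule inj_onI, clarify)
    fix k j k' j' assume kj: "(k,j) \<in> D" "(k',j') \<in> D" and eq: "b k j = b k' j'"
    have k: "k \<in> {1..p}" "k' \<in> {1..p}" and j: "j \<in> {1..m}" "j' \<in> {1..m}" using kj unfolding D_def by auto
    have "r k = r k'" using normb[OF k(1), of j] normb[OF k(2), of j'] eq by simp
    then have kk: "k = k'" using rinj k by (auto dest: inj_onD)
    have rk: "r k > 0" using rpos k by auto
    have cs: "cos (\<Theta> k j) = cos (\<Theta> k j')" "sin (\<Theta> k j) = sin (\<Theta> k j')"
      using eq rk unfolding bdef kk pt2_eq_iff by auto
    have "cos (\<Theta> k j - \<Theta> k j') = 1"
      unfolding cos_diff cs by (simp add: flip: power2_eq_square)
    then obtain n :: int where n: "\<Theta> k j - \<Theta> k j' = of_int n * 2 * pi"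
      by (auto simp: cos_one_2pi_int)
    have "\<Theta> k j - \<Theta> k j' = 2 * (real j - real j') / real m * pi"
      unfolding \<Theta>_def using m0 by (simp add: field_simps)
    with n have "2 * (real j - real j') / real m * pi = of_int n * 2 * pi" by simp
    then have "pi * (2 * (real j - real j')) = pi * (2 * (of_int n * real m))" using m0 by (simp add: field_simps)
    then have "real j - real j' = of_int n * real m" using pi_gt_zero by (simp only: mult_cancel_left) simp
    then have nj: "int j - int j' = n * int m"
      by (metis of_int_eq_iff of_int_mult of_int_of_nat_eq of_int_diff)
    have "\<bar>int j - int j'\<bar> < int m" using j by auto
    then have "int m * \<bar>n\<bar> < int m * 1" using nj by (simp add: abs_mult mult.commute)
    then have "\<bar>n\<bar> < 1" using m0 by (simp only: mult_less_cancel_left)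
    then have "n = 0" by simp
    then show "k = k' \<and> j = j'" using nj kk by simp
  qed
  have Bimg: "B = (\<lambda>(k,j). b k j) ` D"
    unfolding hB D_def by (auto simp: image_iff) force
  have finB: "finite B" unfolding Bimg D_def by simp
  have cardB: "card B = p * m"
    using card_image[OF binj] unfolding Bimg by (simp add: D_def)
  have normB: "norm ` B = r ` {1..p}"
  proof
    show "norm ` B \<subseteq> r ` {1..p}" unfolding Bimg D_def using normb by auto
    show "r ` {1..p} \<subseteq> norm ` B"
    proof
      fix x assume "x \<in> r ` {1..p}"
      then obtain k where k: "k \<in> {1..p}" "x = r k" by auto
      have "b k 1 \<in> B" unfolding Bimg D_def using k m0 by force
      then show "x \<in> norm ` B" using normb[OF k(1), of 1] k by (metis image_eqI)
    qed
  qed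
  have cardnB: "card (norm ` B) = p" unfolding normB card_image[OF rinj] by simp
  have zB: "0 \<notin> B"
  proof
    assume "0 \<in> B"
    then obtain k j where kj: "k \<in> {1..p}" "b k j = 0" unfolding Bimg D_def by auto
    then have "r k = 0" using normb[OF kj(1), of j] by simp
    then show False using rpos[OF kj(1)] by simp
  qed
  have sqless: "r k ^ 2 < r l ^ 2" if "k \<in> {1..p}" "l \<in> {1..p}" "k < l" for k l
    using rless[OF that] rpos[OF that(1)] by (intro power_strict_mono) auto
  have Wpos: "W k > 0" if k: "k \<in> {1..p}" for k
  proof (cases "k = 1")
    case True then show ?thesis using hr0 by (simp add: W_def)
  next
    case False
    then have k2: "k \<ge> 2" using k by auto
    define f where "f l = (r 1 ^ 2 - r l ^ 2) / (r k ^ 2 - r l ^ 2)" for l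
    have num: "r 1 ^ 2 - r l ^ 2 < 0" if "l \<in> {2..p}" for l
      using sqless[of 1 l] that hp(1) by auto
    have fnz: "\<forall>l\<in>{2..p}-{k}. f l \<noteq> 0"
    proof
      fix l assume l: "l \<in> {2..p}-{k}"
      have "r k ^ 2 \<noteq> r l ^ 2" using sqless[of k l] sqless[of l k] l k by (cases k l rule: linorder_cases) auto
      then show "f l \<noteq> 0" using num[of l] l unfolding f_def by auto
    qed
    have neg: "{l\<in>{2..p}-{k}. f l < 0} = {2..<k}"
    proof (intro set_eqI iffI)
      fix l assume l: "l \<in> {l\<in>{2..p}-{k}. f l < 0}"
      show "l \<in> {2..<k}"
      proof (rule ccontr)
        assume "l \<notin> {2..<k}"
        then have "k < l" using l by auto
        then have "r k ^ 2 - r l ^ 2 < 0" using sqless[of k l] l k by auto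
        then have "f l > 0" using num[of l] l unfolding f_def by (simp add: divide_neg_neg)
        then show False using l by auto
      qed
    next
      fix l assume l: "l \<in> {2..<k}"
      then have "r l ^ 2 < r k ^ 2" using sqless[of l k] k by auto
      then have "f l < 0" using num[of l] l k unfolding f_def by (simp add: divide_neg_pos)
      then show "l \<in> {l\<in>{2..p}-{k}. f l < 0}" using l k by auto
    qed
    have P: "(-1) ^ (k - 2) * prod f ({2..p}-{k}) > 0"
      using prod_sign[of "{2..p}-{k}" f] fnz unfolding neg by simp
    have "(-1::real) ^ k = (-1) ^ (k - 2)"
    proof -
      have "k = (k - 2) + 2" using k2 by simp
      then have "(-1::real) ^ k = (-1) ^ (k - 2) * (-1)^2" by (metis power_add)
      then show ?thesis by simp
    qed
    then have "W k = (1 / r k ^ m) * ((-1) ^ (k - 2) * prod f ({2..p}-{k}))"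
      unfolding W_def f_def using False by simp
    also have "\<dots> > 0" using P rpos[OF k] by simp
    finally show ?thesis .
  qed
  have pos: "\<forall>x\<in>B. w x > 0"
    unfolding Bimg D_def using wb Wpos by auto
  have anti: "odd t \<longrightarrow> antipodal_w B w"
  proof
    assume "odd t"
    then have "even m" using hm tm by presburger
    then obtain h where h: "m = 2 * h" by auto
    have h0: "h > 0" using m0 h by simp
    have opp: "\<exists>j'\<in>{1..m}. b k j' = - b k j" if j: "j \<in> {1..m}" for k j
    proof (cases "j \<le> h")
      case True
      have "\<Theta> k (j + h) = \<Theta> k j + pi" unfolding \<Theta>_def h using h0 by (simp add: field_simps)
      then have "b k (j + h) = - b k j" unfolding bdef neg_pt2 by simp
      moreover have "j + h \<in> {1..m}" using True j h by auto
      ultimately show ?thesis by blast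
    next
      case False
      have "\<Theta> k (j - h) = \<Theta> k j - pi" unfolding \<Theta>_def h using h0 False by (simp add: field_simps of_nat_diff)
      then have "b k (j - h) = - b k j" unfolding bdef neg_pt2 by simp
      moreover have "j - h \<in> {1..m}" using False j h by auto
      ultimately show ?thesis by blast
    qed
    show "antipodal_w B w" unfolding antipodal_w_def
    proof
      fix x assume "x \<in> B"
      then obtain k j where kj: "k \<in> {1..p}" "j \<in> {1..m}" "x = b k j" unfolding Bimg D_def by auto
      obtain j' where j': "j' \<in> {1..m}" "b k j' = - b k j" using opp[OF kj(2)] by blast
      have "-x \<in> B" unfolding Bimg D_def using kj j' by force
      moreover have "w (-x) = w x" using wb kj j' by (metis minus_minus)
      ultimately show "-x \<in> B \<and> w (-x) = w x" by blast
    qed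
  qed
  define S where "S d = (\<Sum>k\<in>{1..p}. W k * (-1)^k * r k ^ d)" for d
  define T where "T d = (\<Sum>k\<in>{1..p}. W k * r k ^ d)" for d
  have swap3: "(\<Sum>k\<in>K. \<Sum>i\<le>t. \<Sum>j\<le>t-i. F k i j) = (\<Sum>i\<le>t. \<Sum>j\<le>t-i. \<Sum>k\<in>K. F k i j)"
    for K :: "nat set" and F :: "nat \<Rightarrow> nat \<Rightarrow> nat \<Rightarrow> real"
  proof -
    have "(\<Sum>k\<in>K. \<Sum>i\<le>t. \<Sum>j\<le>t-i. F k i j) = (\<Sum>i\<le>t. \<Sum>k\<in>K. \<Sum>j\<le>t-i. F k i j)"
      by (rule sum.swap)
    also have "\<dots> = (\<Sum>i\<le>t. \<Sum>j\<le>t-i. \<Sum>k\<in>K. F k i j)"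
      by (rule sum.cong[OF refl]) (rule sum.swap)
    finally show ?thesis .
  qed
  have Wr_eq: "Wr B w (r k) = real m * W k" if k: "k \<in> {1..p}" for k
  proof -
    have set: "{x\<in>B. norm x = r k} = b k ` {1..m}"
    proof
      show "{x\<in>B. norm x = r k} \<subseteq> b k ` {1..m}"
      proof
        fix x assume x: "x \<in> {x\<in>B. norm x = r k}"
        then obtain k' j where kj: "k' \<in> {1..p}" "j \<in> {1..m}" "x = b k' j" unfolding Bimg D_def by auto
        then have "r k' = r k" using normb[OF kj(1), of j] x by simp
        then have "k' = k" using rinj kj(1) k by (auto dest: inj_onD)
        then show "x \<in> b k ` {1..m}" using kj by auto
      qed
      show "b k ` {1..m} \<subseteq> {x\<in>B. norm x = r k}"
        using normb[OF k] k unfolding Bimg D_def by force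
    qed
    have inj: "inj_on (b k) {1..m}"
    proof (rule inj_onI)
      fix j j' assume "j \<in> {1..m}" "j' \<in> {1..m}" "b k j = b k j'"
      then show "j = j'" using inj_onD[OF binj, of "(k,j)" "(k,j')"] k unfolding D_def by auto
    qed
    have "Wr B w (r k) = (\<Sum>j\<in>{1..m}. w (b k j))"
      unfolding Wr_def set sum.reindex[OF inj] by simp
    also have "\<dots> = (\<Sum>j\<in>{1..m}. W k)" using wb k by simp
    finally show ?thesis by simp
  qed
  have zero: "Bcoef m i j * S (i + j) = 0" if ij: "i + j \<le> t" for i j
  proof (cases "Bcoef m i j = 0")
    case True then show ?thesis by simp
  next
    case False
    then have md: "m \<le> i + j \<and> even (i + j - m)" using Bcoef_zero[OF m0, of i j] ij t2m by linarith
    then obtain s where s: "i + j = m + 2 * s" by (metis add.commute dvd_def le_add_diff_inverse2)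
    have sp: "s < card {2..p}" using s ij tm by simp
    have p2: "2 \<le> p" using s ij tm by simp
    have sq: "r l ^ (m + 2 * s) = r l ^ m * (r l ^ 2) ^ s" for l
      by (simp add: power_add power_mult)
    have first: "W 1 * (-1) ^ 1 * r 1 ^ (m + 2 * s) = - ((r 1 ^ 2) ^ s)"
      unfolding W_def sq using hr0 by simp
    have rest: "W k * (-1)^k * r k ^ (m + 2 * s) =
       (\<Prod>l\<in>{2..p}-{k}. (r 1 ^ 2 - r l ^ 2) / (r k ^ 2 - r l ^ 2)) * (r k ^ 2) ^ s" if k: "k \<in> {2..p}" for k
    proof -
      have "(-1::real)^k * (-1)^k = 1" by (simp flip: power_add)
      moreover have "r k ^ m \<noteq> 0" using rpos[of k] k by simp
      ultimately show ?thesis unfolding W_def sq using k by (simp add: field_simps)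
    qed
    have injsq: "inj_on (\<lambda>l. r l ^ 2) {2..p}"
    proof (rule inj_onI)
      fix k l assume "k \<in> {2..p}" "l \<in> {2..p}" "r k ^ 2 = r l ^ 2"
      then show "k = l" using sqless[of k l] sqless[of l k] by (cases k l rule: linorder_cases) auto
    qed
    have "S (i + j) = W 1 * (-1)^1 * r 1 ^ (m + 2 * s) + (\<Sum>k\<in>{2..p}. W k * (-1)^k * r k ^ (m + 2 * s))"
      unfolding S_def s using hp(1) by (simp add: sum.atLeast_Suc_atMost numeral_2_eq_2)
    also have "(\<Sum>k\<in>{2..p}. W k * (-1)^k * r k ^ (m + 2 * s)) =
        (\<Sum>k\<in>{2..p}. (\<Prod>l\<in>{2..p}-{k}. (r 1 ^ 2 - r l ^ 2) / (r k ^ 2 - r l ^ 2)) * (r k ^ 2) ^ s)"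
      using rest by (intro sum.cong refl)
    also have "\<dots> = (r 1 ^ 2) ^ s"
      by (rule lagrange_power[of "{2..p}" "\<lambda>l. r l ^ 2" s "r 1 ^ 2"]) (use injsq sp in auto)
    finally have "S (i + j) = 0" unfolding first by simp
    then show ?thesis by simp
  qed
  have design: "\<forall>c. (\<Sum>\<rho>\<in>norm ` B. Wr B w \<rho> * circle_avg \<rho> (poly2 t c)) = (\<Sum>x\<in>B. w x * poly2 t c x)"
  proof
    fix c
    have "(\<Sum>\<rho>\<in>norm ` B. Wr B w \<rho> * circle_avg \<rho> (poly2 t c)) =
        (\<Sum>k\<in>{1..p}. Wr B w (r k) * circle_avg (r k) (poly2 t c))"
      unfolding normB sum.reindex[OF rinj] by simp
    also have "\<dots> = (\<Sum>k\<in>{1..p}. \<Sum>i\<le>t. \<Sum>j\<le>t - i. real m * W k * (c i j * r k ^(i+j) * Acoef i j))"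
      by (intro sum.cong refl) (simp add: Wr_eq circle_avg_poly2 sum_distrib_left)
    also have "\<dots> = (\<Sum>i\<le>t. \<Sum>j\<le>t - i. c i j * real m * Acoef i j * T (i + j))"
      unfolding swap3 T_def by (simp add: sum_distrib_left mult_ac)
    finally have L: "(\<Sum>\<rho>\<in>norm ` B. Wr B w \<rho> * circle_avg \<rho> (poly2 t c)) =
        (\<Sum>i\<le>t. \<Sum>j\<le>t - i. c i j * real m * Acoef i j * T (i + j))" .
    have "(\<Sum>x\<in>B. w x * poly2 t c x) = (\<Sum>(k,j)\<in>D. w (b k j) * poly2 t c (b k j))"
      unfolding Bimg sum.reindex[OF binj] by (simp add: case_prod_beta)
    also have "\<dots> = (\<Sum>k\<in>{1..p}. \<Sum>j\<in>{1..m}. W k * poly2 t c (b k j))"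
      unfolding D_def sum.cartesian_product[symmetric] using wb by (intro sum.cong refl) simp
    also have "\<dots> = (\<Sum>k\<in>{1..p}. W k * (\<Sum>l\<in>{1..m}. poly2 t c (pt2 (r k * cos ((2 * real l + real k) / real m * pi)) (r k * sin ((2 * real l + real k) / real m * pi)))))"
      unfolding bdef \<Theta>_def by (simp add: sum_distrib_left)
    also have "\<dots> = (\<Sum>k\<in>{1..p}. \<Sum>i\<le>t. \<Sum>j\<le>t - i. W k * (c i j * r k ^(i+j) * (real m * (Acoef i j + (-1)^k * Bcoef m i j))))"
      by (rule sum.cong[OF refl], subst ring_poly2[OF m0 t2m]) (simp only: sum_distrib_left)
    also have "\<dots> = (\<Sum>i\<le>t. \<Sum>j\<le>t - i. c i j * real m * (Acoef i j * T (i + j) + Bcoef m i j * S (i + j)))"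
      unfolding swap3 T_def S_def by (simp add: sum_distrib_left sum.distrib algebra_simps)
    also have "\<dots> = (\<Sum>i\<le>t. \<Sum>j\<le>t - i. c i j * real m * Acoef i j * T (i + j))"
      using zero by (intro sum.cong refl) (simp add: algebra_simps)
    finally show "(\<Sum>\<rho>\<in>norm ` B. Wr B w \<rho> * circle_avg \<rho> (poly2 t c)) = (\<Sum>x\<in>B. w x * poly2 t c x)"
      using L by simp
  qed
  have Nb: "Nbound 2 p t = p * m" using Nbound2[OF h4] hm by simp
  show ?thesis
    unfolding tight_design2_def euclidean_design2_def
    using pos anti design finB zB cardB cardnB Nb normB by simp
qed

end
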